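(* Let $E$ be a functional defined on all $n$-qubit pure states, for all natural numbers $n$. Suppose (i) $E$ is a type I entanglement monotone, and (ii) $E(|\psi\rangle|0\rangle)=E(|\psi\rangle)$ for every multi-qubit state $|\psi\rangle$. Then $E$ is a type II entanglement monotone.
   Context: A type I entanglement monotone is a functional $M$ such that, for every $n$ and every LOCC protocol (each qubit a separate party) applied to an $n$-qubit state $|\psi\rangle$ yielding $n$-qubit output states $|\psi_i\rangle$ with probabilities $p_i$, one has $M(|\psi\rangle)\ge\sum_i p_iM(|\psi_i\rangle)$. For an $N$-qubit $|\psi\rangle$ and an $n$-qubit $|\phi\rangle$, $n\le N$, write $|\psi\rangle\geq_{\mathrm{LOCC}}|\phi\rangle$ if for some set $A$ of $n$ qubits the transformation $|\psi\rangle\to|\phi\rangle^{A}|0\rangle^{\bar A}$ is achievable exactly and with probability one by LOCC. A type II entanglement monotone is a functional $E$ on all $n$-qubit states, all $n$, with $E(|\psi\rangle)\ge E(|\psi'\rangle)$ whenever $|\psi\rangle\geq_{\mathrm{LOCC}}|\psi'\rangle$. *)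

theory Defs
  imports Complex_Main
begin

text \<open>An n-qubit (unnormalised) vector: amplitudes indexed by computational basis
strings b :: nat \<Rightarrow> bool, where b k is the value of qubit k (qubits 0..n-1).\<close>
type_synonym qstate = "(nat \<Rightarrow> bool) \<Rightarrow> complex"

definition qbasis :: "nat \<Rightarrow> (nat \<Rightarrow> bool) set" where
  "qbasis n = {b. \<forall>k. b k \<longrightarrow> k < n}"

definition snorm2 :: "nat \<Rightarrow> qstate \<Rightarrow> real" where
  "snorm2 n v = (\<Sum>b\<in>qbasis n. (cmod (v b))^2)"

definition is_state :: "nat \<Rightarrow> qstate \<Rightarrow> bool" where
  "is_state n v \<longleftrightarrow> (\<forall>b. b \<notin> qbasis n \<longrightarrow> v b = 0) \<and> snorm2 n v = 1"

definition normalize :: "nat \<Rightarrow> qstate \<Rightarrow> qstate" where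
  "normalize n v = (\<lambda>b. v b / complex_of_real (sqrt (snorm2 n v)))"

text \<open>A single-qubit operator (2x2 complex matrix, K out in) acting on qubit j.\<close>
type_synonym qop = "bool \<Rightarrow> bool \<Rightarrow> complex"

definition apply_local :: "nat \<Rightarrow> qop \<Rightarrow> qstate \<Rightarrow> qstate" where
  "apply_local j K v = (\<lambda>b. \<Sum>c\<in>UNIV. K (b j) c * v (b(j := c)))"

definition kraus_complete :: "qop list \<Rightarrow> bool" where
  "kraus_complete Ks \<longleftrightarrow>
     (\<forall>c d. (\<Sum>K\<leftarrow>Ks. \<Sum>a\<in>UNIV. cnj (K a c) * K a d) = (if c = d then 1 else 0))"

text \<open>(Finite-round) LOCC protocols with each qubit a separate party: in each round
one party j performs a local measurement given by Kraus operators; depending on the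
(broadcast) outcome, the protocol continues with a subprotocol.\<close>
datatype locc = Done | Meas nat "(qop \<times> locc) list"

fun wf_locc :: "nat \<Rightarrow> locc \<Rightarrow> bool" where
  "wf_locc n Done = True"
| "wf_locc n (Meas j ks) =
     (j < n \<and> kraus_complete (map fst ks) \<and> (\<forall>x\<in>set ks. wf_locc n (snd x)))"

text \<open>Unnormalised output vectors of all branches (squared norm = probability).\<close>
fun outcomes :: "locc \<Rightarrow> qstate \<Rightarrow> qstate list" where
  "outcomes Done v = [v]"
| "outcomes (Meas j ks) v = concat (map (\<lambda>x. outcomes (snd x) (apply_local j (fst x) v)) ks)"

text \<open>Type I entanglement monotone: non-increasing on average under LOCC.
  Outputs |psi_i> with probabilities p_i > 0 (zero-probability branches do not occur).\<close>
definition typeI_monotone :: "(nat \<Rightarrow> qstate \<Rightarrow> real) \<Rightarrow> bool" where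
  "typeI_monotone E \<longleftrightarrow>
     (\<forall>n \<psi> P. n \<ge> 1 \<and> is_state n \<psi> \<and> wf_locc n P \<longrightarrow>
        E n \<psi> \<ge> (\<Sum>v\<leftarrow>filter (\<lambda>v. snorm2 n v \<noteq> 0) (outcomes P \<psi>).
                    snorm2 n v * E n (normalize n v)))"

text \<open>The N-qubit state |phi>^A |0>^(complement of A): the qubits of the
  n-qubit state phi are placed, in order, on the qubits of A (|A| = n).\<close>
definition embed :: "nat \<Rightarrow> nat set \<Rightarrow> qstate \<Rightarrow> qstate" where
  "embed N A \<phi> = (\<lambda>b. if (\<forall>k. k \<notin> A \<longrightarrow> \<not> b k)
       then \<phi> (\<lambda>i. i < card A \<and> b (sorted_list_of_set A ! i)) else 0)"

text \<open>psi >=_LOCC phi: exact transformation with probability one.\<close>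
definition locc_geq :: "nat \<Rightarrow> qstate \<Rightarrow> nat \<Rightarrow> qstate \<Rightarrow> bool" where
  "locc_geq N \<psi> n \<phi> \<longleftrightarrow>
     (\<exists>A P. A \<subseteq> {..<N} \<and> card A = n \<and> wf_locc N P \<and>
        (\<forall>v\<in>set (outcomes P \<psi>). snorm2 N v \<noteq> 0 \<longrightarrow> normalize N v = embed N A \<phi>))"

definition typeII_monotone :: "(nat \<Rightarrow> qstate \<Rightarrow> real) \<Rightarrow> bool" where
  "typeII_monotone E \<longleftrightarrow>
     (\<forall>N n \<psi> \<phi>. 1 \<le> n \<and> n \<le> N \<and> is_state N \<psi> \<and> is_state n \<phi> \<and> locc_geq N \<psi> n \<phi>
        \<longrightarrow> E N \<psi> \<ge> E n \<phi>)"

text \<open>Adjoin a new qubit in state |0> at position k (0 \<le> k \<le> n) of an n-qubit state;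
  the old qubits k, k+1, ... become k+1, k+2, ...\<close>
definition insert_zero :: "nat \<Rightarrow> qstate \<Rightarrow> qstate" where
  "insert_zero k v = (\<lambda>b. if b k then 0 else v (\<lambda>i. if i < k then b i else b (Suc i)))"

end

theory Submission imports Defs begin

lemma finite_qbasis: "finite (qbasis N)"
proof -
  have "qbasis N \<subseteq> (\<lambda>S k. k \<in> S) ` Pow {..<N}"
  proof
    fix b assume "b \<in> qbasis N"
    hence "{k. b k} \<in> Pow {..<N}" by (auto simp: qbasis_def)
    moreover have "b = (\<lambda>k. k \<in> {k. b k})" by auto
    ultimately show "b \<in> (\<lambda>S k. k \<in> S) ` Pow {..<N}" by blast
  qed
  thus ?thesis by (rule finite_subset) auto
qed

lemma split_qbasis:
  assumes "j < N"
  shows "(\<Sum>b\<in>qbasis N. f b) = (\<Sum>b0\<in>{b\<in>qbasis N. \<not> b j}. \<Sum>a\<in>UNIV. f (b0(j:=a)))"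
proof -
  have "(\<Sum>b0\<in>{b\<in>qbasis N. \<not> b j}. \<Sum>a\<in>UNIV. f (b0(j:=a)))
     = (\<Sum>p\<in>{b\<in>qbasis N. \<not> b j} \<times> UNIV. f ((fst p)(j:=snd p)))"
    by (subst sum.cartesian_product) (simp add: case_prod_beta)
  also have "\<dots> = (\<Sum>b\<in>qbasis N. f b)"
    by (rule sum.reindex_bij_witness[where i="\<lambda>b. (b(j:=False), b j)" and j="\<lambda>p. (fst p)(j:=snd p)"])
       (use assms in \<open>auto simp: qbasis_def fun_eq_iff\<close>)
  finally show ?thesis by simp
qed

definition supp :: "nat \<Rightarrow> qstate \<Rightarrow> bool" where
  "supp N v \<longleftrightarrow> (\<forall>b. b \<notin> qbasis N \<longrightarrow> v b = 0)"

lemma supp_apply_local: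
  assumes "j < N" "supp N v" shows "supp N (apply_local j K v)"
  unfolding supp_def
proof (intro allI impI)
  fix b assume "b \<notin> qbasis N"
  then obtain k where k: "b k" "\<not> k < N" by (auto simp: qbasis_def)
  have "\<And>c. b(j:=c) \<notin> qbasis N" using k assms(1) by (auto simp: qbasis_def)
  hence "\<And>c. v (b(j:=c)) = 0" using assms(2) by (auto simp: supp_def)
  thus "apply_local j K v b = 0" by (simp add: apply_local_def)
qed

lemma snorm2_c: "complex_of_real (snorm2 N u) = (\<Sum>b\<in>qbasis N. u b * cnj (u b))"
  unfolding snorm2_def of_real_sum by (intro sum.cong refl) (simp add: complex_norm_square[symmetric])

lemma sum_list_swap: "(\<Sum>K\<leftarrow>Ks. \<Sum>x\<in>S. g K x) = (\<Sum>x\<in>S. \<Sum>K\<leftarrow>Ks. g K x)"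
  by (induction Ks) (simp_all add: sum.distrib)

lemma sum_list_of_real: "complex_of_real (\<Sum>K\<leftarrow>Ks. g K) = (\<Sum>K\<leftarrow>Ks. complex_of_real (g K))"
  by (induction Ks) simp_all

lemma sum_list_mult_right: "(\<Sum>K\<leftarrow>Ks. (g K :: complex) * c) = (\<Sum>K\<leftarrow>Ks. g K) * c"
  by (induction Ks) (simp_all add: algebra_simps)

lemma swap3: "(\<Sum>a\<in>A. \<Sum>c\<in>B. \<Sum>d\<in>C. f a c d) = (\<Sum>c\<in>B. \<Sum>d\<in>C. \<Sum>a\<in>A. f a c d)"
  by (rule trans[OF sum.swap], rule sum.cong[OF refl], rule sum.swap)

lemma kraus_norm:
  assumes "j < N" "kraus_complete Ks"
  shows "(\<Sum>K\<leftarrow>Ks. snorm2 N (apply_local j K v)) = snorm2 N v"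
proof -
  let ?Q0 = "{b\<in>qbasis N. \<not> b j}"
  let ?V = "\<lambda>b0 c d. v (b0(j:=c)) * cnj (v (b0(j:=d)))"
  have one: "complex_of_real (snorm2 N (apply_local j K v)) =
     (\<Sum>b0\<in>?Q0. \<Sum>c\<in>UNIV. \<Sum>d\<in>UNIV. (\<Sum>a\<in>UNIV. K a c * cnj (K a d)) * ?V b0 c d)" for K
  proof -
    have "complex_of_real (snorm2 N (apply_local j K v)) =
       (\<Sum>b0\<in>?Q0. \<Sum>a\<in>UNIV. apply_local j K v (b0(j:=a)) * cnj (apply_local j K v (b0(j:=a))))"
      unfolding snorm2_c using split_qbasis[OF assms(1)] by blast
    also have "\<dots> = (\<Sum>b0\<in>?Q0. \<Sum>a\<in>UNIV. \<Sum>c\<in>UNIV. \<Sum>d\<in>UNIV. K a c * cnj (K a d) * ?V b0 c d)"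
      by (simp add: apply_local_def sum_product cnj_sum mult_ac)
    also have "\<dots> = (\<Sum>b0\<in>?Q0. \<Sum>c\<in>UNIV. \<Sum>d\<in>UNIV. \<Sum>a\<in>UNIV. K a c * cnj (K a d) * ?V b0 c d)"
      by (rule sum.cong[OF refl], rule swap3)
    also have "\<dots> = (\<Sum>b0\<in>?Q0. \<Sum>c\<in>UNIV. \<Sum>d\<in>UNIV. (\<Sum>a\<in>UNIV. K a c * cnj (K a d)) * ?V b0 c d)"
      by (simp add: sum_distrib_right)
    finally show ?thesis .
  qed
  have kr: "(\<Sum>K\<leftarrow>Ks. \<Sum>a\<in>UNIV. K a c * cnj (K a d)) = (if c = d then 1 else 0)" for c d
    using assms(2) unfolding kraus_complete_def
    by (simp add: mult.commute)
  have "complex_of_real (\<Sum>K\<leftarrow>Ks. snorm2 N (apply_local j K v)) =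
     (\<Sum>K\<leftarrow>Ks. \<Sum>b0\<in>?Q0. \<Sum>c\<in>UNIV. \<Sum>d\<in>UNIV. (\<Sum>a\<in>UNIV. K a c * cnj (K a d)) * ?V b0 c d)"
    unfolding sum_list_of_real one ..
  also have "\<dots> = (\<Sum>b0\<in>?Q0. \<Sum>c\<in>UNIV. \<Sum>d\<in>UNIV. (\<Sum>K\<leftarrow>Ks. \<Sum>a\<in>UNIV. K a c * cnj (K a d)) * ?V b0 c d)"
    by (simp only: sum_list_swap sum_list_mult_right)
  also have "\<dots> = (\<Sum>b0\<in>?Q0. \<Sum>c\<in>UNIV. ?V b0 c c)"
    unfolding kr by (simp add: if_distrib[of "\<lambda>x. x * _"] cong: if_cong)
  also have "\<dots> = complex_of_real (snorm2 N v)"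
    unfolding snorm2_c using split_qbasis[OF assms(1), of "\<lambda>b. v b * cnj (v b)"] by simp
  finally show ?thesis using of_real_eq_iff by blast
qed

lemma sum_list_concat': "sum_list (concat xss) = sum_list (map sum_list (xss :: real list list))"
  by (induction xss) simp_all

lemma outcomes_norm:
  "wf_locc N P \<Longrightarrow> (\<Sum>w\<leftarrow>outcomes P v. snorm2 N w) = snorm2 N v"
proof (induction P v rule: outcomes.induct)
  case (1 v) then show ?case by simp
next
  case (2 j ks v)
  have "(\<Sum>w\<leftarrow>outcomes (Meas j ks) v. snorm2 N w)
     = (\<Sum>x\<leftarrow>ks. \<Sum>w\<leftarrow>outcomes (snd x) (apply_local j (fst x) v). snorm2 N w)"
    by (simp add: sum_list_concat' map_concat comp_def)
  also have "\<dots> = (\<Sum>x\<leftarrow>ks. snorm2 N (apply_local j (fst x) v))"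
    using 2 by (intro arg_cong[where f=sum_list] map_cong refl) auto
  also have "\<dots> = (\<Sum>K\<leftarrow>map fst ks. snorm2 N (apply_local j K v))"
    by (simp add: comp_def)
  also have "\<dots> = snorm2 N v"
    using 2(2) by (intro kraus_norm) auto
  finally show ?case .
qed

definition embedf :: "nat \<Rightarrow> (nat \<Rightarrow> nat) \<Rightarrow> qstate \<Rightarrow> qstate" where
  "embedf n f \<phi> = (\<lambda>b. if (\<forall>k. k \<notin> f ` {..<n} \<longrightarrow> \<not> b k)
       then \<phi> (\<lambda>i. i < n \<and> b (f i)) else 0)"

lemma insert_zero_state:
  assumes "is_state n w" "k \<le> n"
  shows "is_state (Suc n) (insert_zero k w)"
proof -
  let ?s = "\<lambda>i. if i < k then i else Suc i"
  have supp: "w c = 0" if "c \<notin> qbasis n" for c using assms(1) that by (simp add: is_state_def)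
  have A: "insert_zero k w b = 0" if "b \<notin> qbasis (Suc n)" for b
  proof (cases "b k")
    case False
    from that obtain m where m: "b m" "\<not> m < Suc n" by (auto simp: qbasis_def)
    have "(\<lambda>i. if i < k then b i else b (Suc i)) \<notin> qbasis n"
      unfolding qbasis_def using m assms(2)
      by (auto intro!: exI[of _ "m - 1"])
    thus ?thesis using False supp by (simp add: insert_zero_def)
  qed (simp add: insert_zero_def)
  have "snorm2 (Suc n) (insert_zero k w) =
      (\<Sum>b\<in>{b\<in>qbasis (Suc n). \<not> b k}. (cmod (w (\<lambda>i. if i < k then b i else b (Suc i))))^2)"
    unfolding snorm2_def
    by (subst sum.inter_filter[OF finite_qbasis]) (auto simp: insert_zero_def intro!: sum.cong)
  also have "\<dots> = snorm2 n w"
    unfolding snorm2_def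
    apply (rule sum.reindex_bij_witness[where i="\<lambda>c i. if i < k then c i else if i = k then False else c (i - 1)"
          and j="\<lambda>b i. if i < k then b i else b (Suc i)"])
    using assms(2) by (auto simp: qbasis_def fun_eq_iff split: if_splits)
  finally show ?thesis using assms A by (auto simp: is_state_def)
qed

lemma embedf_id:
  assumes "is_state n \<phi>" "\<forall>i<n. f i = i"
  shows "embedf n f \<phi> = \<phi>"
proof
  fix b
  have im: "f ` {..<n} = {..<n}" using assms(2) by force
  show "embedf n f \<phi> b = \<phi> b"
  proof (cases "b \<in> qbasis n")
    case True
    hence "(\<lambda>i. i < n \<and> b (f i)) = b" using assms(2) by (auto simp: qbasis_def fun_eq_iff)
    thus ?thesis using True im by (auto simp: embedf_def qbasis_def)
  next
    case False
    thus ?thesis using im assms(1) by (auto simp: embedf_def qbasis_def is_state_def)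
  qed
qed

lemma strict_mono_id:
  fixes f :: "nat \<Rightarrow> nat"
  assumes "strict_mono_on {..<n} f" "\<forall>i<n. f i < n" "i < n"
  shows "f i = i"
proof -
  have ge0: "\<forall>m::nat. m < n \<longrightarrow> m \<le> f m"
  proof (rule allI)
    fix m :: nat show "m < n \<longrightarrow> m \<le> f m"
  proof (induction m)
    case (Suc m)
    have "Suc m < n \<longrightarrow> f m < f (Suc m)" using assms(1) by (auto simp: strict_mono_on_def)
    thus ?case using Suc by auto
  qed simp
  qed
  have ge: "i \<le> f i" if "i < n" for i using ge0 that by blast
  have le: "\<forall>i. i < n \<longrightarrow> n - i = Suc d \<longrightarrow> f i \<le> i" for d
  proof (induction d)
    case 0 then show ?case using assms(2) by auto
  next
    case (Suc d)
    show ?case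
    proof (intro allI impI)
      fix i assume "i < n" "n - i = Suc (Suc d)"
      hence "Suc i < n" "n - Suc i = Suc d" by auto
      hence "f (Suc i) \<le> Suc i" using Suc by blast
      moreover have "f i < f (Suc i)" using assms(1) \<open>Suc i < n\<close> by (auto simp: strict_mono_on_def)
      ultimately show "f i \<le> i" by simp
    qed
  qed
  have "f i \<le> i" using le[of "n - i - 1"] assms(3) by auto
  with ge[OF assms(3)] show ?thesis by simp
qed

lemma embedf_shift:
  assumes "k \<notin> f ` {..<n}"
  shows "embedf n f \<phi> = insert_zero k (embedf n (\<lambda>i. if f i < k then f i else f i - 1) \<phi>)"
proof
  fix b
  let ?g = "\<lambda>i. if f i < k then f i else f i - 1"
  let ?s = "\<lambda>i. if i < k then i else Suc i"
  have fi: "f i \<noteq> k" if "i < n" for i using assms that by auto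
  have sg: "?s (?g i) = f i" if "i < n" for i using fi[OF that] by auto
  have gim: "j \<in> ?g ` {..<n} \<longleftrightarrow> ?s j \<in> f ` {..<n}" for j
  proof
    assume "j \<in> ?g ` {..<n}"
    then obtain i where i: "i < n" "j = ?g i" by auto
    hence "?s j = f i" using sg by presburger
    thus "?s j \<in> f ` {..<n}" using i by auto
  next
    assume "?s j \<in> f ` {..<n}"
    then obtain i where i: "i < n" "?s j = f i" by auto
    hence "?g i = j" using fi[OF i(1)] by (auto split: if_splits)
    thus "j \<in> ?g ` {..<n}" using i by auto
  qed
  show "embedf n f \<phi> b = insert_zero k (embedf n ?g \<phi>) b"
  proof (cases "b k")
    case True
    thus ?thesis using assms by (auto simp: embedf_def insert_zero_def)
  next
    case False
    have arg: "(\<lambda>i. i < n \<and> (\<lambda>i. if i < k then b i else b (Suc i)) (?g i)) = (\<lambda>i. i < n \<and> b (f i))"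
    proof -
      have e: "(if ?g i < k then b (?g i) else b (Suc (?g i))) = b (f i)" if "i < n" for i
        using fi[OF that] by auto
      show ?thesis
      proof (rule ext)
        fix i show "(i < n \<and> (\<lambda>i. if i < k then b i else b (Suc i)) (?g i)) = (i < n \<and> b (f i))"
          using e[of i] by (cases "i < n") simp_all
      qed
    qed
    have cond: "(\<forall>j. j \<notin> ?g ` {..<n} \<longrightarrow> \<not> (if j < k then b j else b (Suc j))) \<longleftrightarrow>
               (\<forall>m. m \<notin> f ` {..<n} \<longrightarrow> \<not> b m)"
    proof
      assume H: "\<forall>j. j \<notin> ?g ` {..<n} \<longrightarrow> \<not> (if j < k then b j else b (Suc j))"
      show "\<forall>m. m \<notin> f ` {..<n} \<longrightarrow> \<not> b m"
      proof (intro allI impI)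
        fix m assume m: "m \<notin> f ` {..<n}"
        show "\<not> b m"
        proof (cases "m = k")
          case True with False show ?thesis by simp
        next
          case mk: False
          define j where "j = (if m < k then m else m - 1)"
          have "?s j = m" using mk by (auto simp: j_def)
          hence "j \<notin> ?g ` {..<n}" using gim m by metis
          hence "\<not> (if j < k then b j else b (Suc j))" using H by blast
          thus ?thesis using \<open>?s j = m\<close> by (auto split: if_splits)
        qed
      qed
    next
      assume H: "\<forall>m. m \<notin> f ` {..<n} \<longrightarrow> \<not> b m"
      show "\<forall>j. j \<notin> ?g ` {..<n} \<longrightarrow> \<not> (if j < k then b j else b (Suc j))"
      proof (intro allI impI)
        fix j assume "j \<notin> ?g ` {..<n}"
        hence "?s j \<notin> f ` {..<n}" using gim by blast
        hence "\<not> b (?s j)" using H by blast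
        thus "\<not> (if j < k then b j else b (Suc j))" by (auto split: if_splits)
      qed
    qed
    show ?thesis using False
      unfolding insert_zero_def embedf_def
      by (simp only: cond arg if_False) 
  qed
qed

lemma embed_E:
  fixes E :: "nat \<Rightarrow> qstate \<Rightarrow> real"
  assumes hyp: "\<And>n \<psi> k. n \<ge> 1 \<Longrightarrow> is_state n \<psi> \<Longrightarrow> k \<le> n \<Longrightarrow>
           E (Suc n) (insert_zero k \<psi>) = E n \<psi>"
    and n1: "n \<ge> 1" and phi: "is_state n \<phi>"
  shows "n \<le> N \<Longrightarrow> strict_mono_on {..<n} f \<Longrightarrow> (\<forall>i<n. f i < N) \<Longrightarrow>
     is_state N (embedf n f \<phi>) \<and> E N (embedf n f \<phi>) = E n \<phi>"
proof (induction N arbitrary: f)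
  case 0 then show ?case using n1 by simp
next
  case (Suc N)
  show ?case
  proof (cases "n = Suc N")
    case True
    hence "\<forall>i<n. f i = i" using strict_mono_id[OF Suc.prems(2)] Suc.prems(3) by auto
    thus ?thesis using embedf_id[OF phi] phi True by simp
  next
    case False
    hence nN: "n \<le> N" using Suc.prems(1) by simp
    have "card (f ` {..<n}) < card {..<Suc N}" using card_image_le[of "{..<n}" f] nN by simp
    hence "\<not> {..<Suc N} \<subseteq> f ` {..<n}"
      using card_mono[OF finite_imageI[OF finite_lessThan], of "{..<Suc N}" f n] by linarith
    then obtain k where k: "k < Suc N" "k \<notin> f ` {..<n}" by blast
    define g where "g = (\<lambda>i. if f i < k then f i else f i - 1)"
    have fi: "f i \<noteq> k" if "i < n" for i using k that by blast
    have sm: "strict_mono_on {..<n} g"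
    proof (rule strict_mono_onI)
      fix r s assume rs: "r \<in> {..<n}" "s \<in> {..<n}" "r < s"
      hence "f r < f s" using Suc.prems(2) by (simp add: strict_mono_on_def)
      moreover have "f r \<noteq> k" "f s \<noteq> k" using fi rs by auto
      ultimately show "g r < g s" unfolding g_def by (split if_split)+ linarith
    qed
    have gN: "\<forall>i<n. g i < N"
    proof (intro allI impI)
      fix i assume "i < n"
      hence "f i < Suc N" "f i \<noteq> k" using Suc.prems(3) fi by auto
      thus "g i < N" unfolding g_def using k(1) by (split if_split) linarith
    qed
    have IH: "is_state N (embedf n g \<phi>) \<and> E N (embedf n g \<phi>) = E n \<phi>"
      by (rule Suc.IH[OF nN sm gN])
    have eq: "embedf n f \<phi> = insert_zero k (embedf n g \<phi>)"
      unfolding g_def by (rule embedf_shift[OF k(2)])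
    have kN: "k \<le> N" using k by simp
    have s1: "is_state (Suc N) (insert_zero k (embedf n g \<phi>))"
      by (rule insert_zero_state[OF IH[THEN conjunct1] kN])
    have N1: "1 \<le> N" using n1 nN by simp
    have s2: "E (Suc N) (insert_zero k (embedf n g \<phi>)) = E N (embedf n g \<phi>)"
      by (rule hyp[OF N1 IH[THEN conjunct1] kN])
    show ?thesis unfolding eq using s1 s2 IH by simp
  qed
qed

lemma sum_list_mult_right_real: "(\<Sum>K\<leftarrow>Ks. (g K :: real) * c) = (\<Sum>K\<leftarrow>Ks. g K) * c"
  by (induction Ks) (simp_all add: algebra_simps)

theorem theorem2:
  fixes E :: "nat \<Rightarrow> qstate \<Rightarrow> real"
  assumes "typeI_monotone E"
    and "\<And>n \<psi> k. n \<ge> 1 \<Longrightarrow> is_state n \<psi> \<Longrightarrow> k \<le> n \<Longrightarrow>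
           E (Suc n) (insert_zero k \<psi>) = E n \<psi>"
  shows "typeII_monotone E"
  unfolding typeII_monotone_def
proof (intro allI impI)
  fix N n \<psi> \<phi>
  assume H: "1 \<le> n \<and> n \<le> N \<and> is_state N \<psi> \<and> is_state n \<phi> \<and> locc_geq N \<psi> n \<phi>"
  then obtain A P where AP: "A \<subseteq> {..<N}" "card A = n" "wf_locc N P"
      "\<forall>v\<in>set (outcomes P \<psi>). snorm2 N v \<noteq> 0 \<longrightarrow> normalize N v = embed N A \<phi>"
    unfolding locc_geq_def by blast
  have finA: "finite A" using AP(1) finite_subset by blast
  define xs where "xs = sorted_list_of_set A"
  define F where "F = (\<lambda>i. xs ! i)"
  have lxs: "length xs = n" using AP(2) finA by (simp add: xs_def)
  have sxs: "set xs = A" using finA by (simp add: xs_def)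
  have im: "F ` {..<n} = A"
    unfolding F_def using lxs sxs by (auto simp: set_conv_nth)
  have emb: "embed N A \<phi> = embedf n F \<phi>"
  proof -
    have im': "(!) (sorted_list_of_set A) ` {..<n} = A" using im by (simp add: F_def xs_def)
    show ?thesis unfolding embed_def embedf_def F_def xs_def AP(2) im' by (rule refl)
  qed
  have ss: "sorted_wrt (<) xs" using strict_sorted_list_of_set xs_def by simp
  have sm: "strict_mono_on {..<n} F"
    by (rule strict_mono_onI) (use ss lxs in \<open>auto simp: F_def intro: sorted_wrt_nth_less\<close>)
  have FN: "\<forall>i<n. F i < N" using im AP(1) by auto
  have W: "is_state N (embed N A \<phi>) \<and> E N (embed N A \<phi>) = E n \<phi>"
  proof -
    have n1: "1 \<le> n" and nN: "n \<le> N" and phi: "is_state n \<phi>" using H by auto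
    show ?thesis unfolding emb by (rule embed_E[of E, OF assms(2) n1 phi nN sm FN])
  qed
  have "E N \<psi> \<ge> (\<Sum>v\<leftarrow>filter (\<lambda>v. snorm2 N v \<noteq> 0) (outcomes P \<psi>).
                    snorm2 N v * E N (normalize N v))"
  proof -
    have "1 \<le> N \<and> is_state N \<psi> \<and> wf_locc N P" using H AP(3) by auto
    thus ?thesis using assms(1) unfolding typeI_monotone_def by blast
  qed
  also have "(\<Sum>v\<leftarrow>filter (\<lambda>v. snorm2 N v \<noteq> 0) (outcomes P \<psi>).
                    snorm2 N v * E N (normalize N v))
           = (\<Sum>v\<leftarrow>filter (\<lambda>v. snorm2 N v \<noteq> 0) (outcomes P \<psi>). snorm2 N v * E n \<phi>)"
  proof (intro arg_cong[where f=sum_list] map_cong refl)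
    fix v assume "v \<in> set (filter (\<lambda>v. snorm2 N v \<noteq> 0) (outcomes P \<psi>))"
    hence "normalize N v = embed N A \<phi>" using AP(4) by simp
    thus "snorm2 N v * E N (normalize N v) = snorm2 N v * E n \<phi>" using W by simp
  qed
  also have "\<dots> = (\<Sum>v\<leftarrow>filter (\<lambda>v. snorm2 N v \<noteq> 0) (outcomes P \<psi>). snorm2 N v) * E n \<phi>"
    by (rule sum_list_mult_right_real)
  also have "(\<Sum>v\<leftarrow>filter (\<lambda>v. snorm2 N v \<noteq> 0) (outcomes P \<psi>). snorm2 N v)
      = (\<Sum>v\<leftarrow>outcomes P \<psi>. snorm2 N v)"
    by (rule sum_list_map_filter) auto
  also have "\<dots> = 1" using outcomes_norm[OF AP(3)] H by (simp add: is_state_def)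
  finally show "E n \<phi> \<le> E N \<psi>" by simp
qed

end
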